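(* Let $\mathfrak N$ be a two-step nilpotent Lie algebra of type $(2,q)$ with no Euclidean de Rham factor, i.e. $[\mathfrak N,\mathfrak N]$ equals the center of $\mathfrak N$. If $\mathfrak N$ is a non-Einstein nilradical, then $\mathfrak N$ is indecomposable.
   Context: Type $(p,q)$: $\dim[\mathfrak N,\mathfrak N]=p$ and $\dim\mathfrak N-p=q$. A nilpotent Lie algebra is an Einstein nilradical if it admits an inner product whose Ricci operator equals $\lambda\mathrm{Id}+D$ for some $\lambda\in\mathbb R$ and some symmetric derivation $D$; otherwise it is a non-Einstein nilradical. Indecomposable means not a direct sum of two nonzero ideals. *)

theory Defs
  imports "HOL-Analysis.Analysis"
begin

text \<open>A finite-dimensional real Lie algebra is modelled by a bracket on a
  finite-dimensional real vector space (a type of class euclidean_space; its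
  built-in inner product is NOT used anywhere below).\<close>

definition lie_algebra :: "('a::euclidean_space \<Rightarrow> 'a \<Rightarrow> 'a) \<Rightarrow> bool" where
  "lie_algebra br \<longleftrightarrow>
     (\<forall>x. linear (br x)) \<and> (\<forall>y. linear (\<lambda>x. br x y)) \<and>
     (\<forall>x. br x x = 0) \<and>
     (\<forall>x y z. br x (br y z) + br y (br z x) + br z (br x y) = 0)"

definition derived_algebra :: "('a::euclidean_space \<Rightarrow> 'a \<Rightarrow> 'a) \<Rightarrow> 'a set" where
  "derived_algebra br = span {br x y | x y. True}"

definition lie_center :: "('a::euclidean_space \<Rightarrow> 'a \<Rightarrow> 'a) \<Rightarrow> 'a set" where
  "lie_center br = {z. \<forall>x. br z x = 0}"

definition two_step_nilpotent :: "('a::euclidean_space \<Rightarrow> 'a \<Rightarrow> 'a) \<Rightarrow> bool" where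
  "two_step_nilpotent br \<longleftrightarrow> lie_algebra br \<and> derived_algebra br \<noteq> {0} \<and>
     (\<forall>x y z. br x (br y z) = 0)"

definition lie_type :: "('a::euclidean_space \<Rightarrow> 'a \<Rightarrow> 'a) \<Rightarrow> nat \<Rightarrow> nat \<Rightarrow> bool" where
  "lie_type br p q \<longleftrightarrow> dim (derived_algebra br) = p \<and> DIM('a) - p = q"

definition inner_product :: "('a::euclidean_space \<Rightarrow> 'a \<Rightarrow> real) \<Rightarrow> bool" where
  "inner_product ip \<longleftrightarrow> (\<forall>x. linear (ip x)) \<and> (\<forall>x y. ip x y = ip y x) \<and>
     (\<forall>x. x \<noteq> 0 \<longrightarrow> ip x x > 0)"

definition orthonormal_basis :: "('a::euclidean_space \<Rightarrow> 'a \<Rightarrow> real) \<Rightarrow> 'a list \<Rightarrow> bool" where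
  "orthonormal_basis ip es \<longleftrightarrow> length es = DIM('a) \<and>
     (\<forall>i<length es. \<forall>j<length es. ip (es!i) (es!j) = (if i = j then 1 else 0))"

definition lie_derivation :: "('a::euclidean_space \<Rightarrow> 'a \<Rightarrow> 'a) \<Rightarrow> ('a \<Rightarrow> 'a) \<Rightarrow> bool" where
  "lie_derivation br D \<longleftrightarrow> linear D \<and> (\<forall>x y. D (br x y) = br (D x) y + br x (D y))"

text \<open>Ricci operator of the nilpotent metric Lie algebra (N, ip), given through
  ip (Ric X) Y = -1/2 sum_i ip [X,e_i] [Y,e_i] + 1/4 sum_{i,j} ip [e_i,e_j] X * ip [e_i,e_j] Y
  for an orthonormal basis (e_i).\<close>
definition ricci_form :: "('a::euclidean_space \<Rightarrow> 'a \<Rightarrow> 'a) \<Rightarrow> ('a \<Rightarrow> 'a \<Rightarrow> real) \<Rightarrow> 'a list \<Rightarrow> 'a \<Rightarrow> 'a \<Rightarrow> real" where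
  "ricci_form br ip es X Y =
     - (1/2) * (\<Sum>i<length es. ip (br X (es!i)) (br Y (es!i)))
     + (1/4) * (\<Sum>i<length es. \<Sum>j<length es. ip (br (es!i) (es!j)) X * ip (br (es!i) (es!j)) Y)"

definition einstein_nilradical :: "('a::euclidean_space \<Rightarrow> 'a \<Rightarrow> 'a) \<Rightarrow> bool" where
  "einstein_nilradical br \<longleftrightarrow>
     (\<exists>ip es lam D. inner_product ip \<and> orthonormal_basis ip es \<and>
        lie_derivation br D \<and> (\<forall>x y. ip (D x) y = ip x (D y)) \<and>
        (\<forall>X Y. ricci_form br ip es X Y = ip (lam *\<^sub>R X + D X) Y))"

definition lie_ideal :: "('a::euclidean_space \<Rightarrow> 'a \<Rightarrow> 'a) \<Rightarrow> 'a set \<Rightarrow> bool" where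
  "lie_ideal br I \<longleftrightarrow> subspace I \<and> (\<forall>x y. y \<in> I \<longrightarrow> br x y \<in> I)"

definition indecomposable :: "('a::euclidean_space \<Rightarrow> 'a \<Rightarrow> 'a) \<Rightarrow> bool" where
  "indecomposable br \<longleftrightarrow>
     \<not> (\<exists>I J. lie_ideal br I \<and> lie_ideal br J \<and> I \<noteq> {0} \<and> J \<noteq> {0} \<and>
            I \<inter> J = {0} \<and> {x + y | x y. x \<in> I \<and> y \<in> J} = UNIV)"

end

theory Submission
  imports Defs
begin


lemma span_singleton_coeff:
  fixes z v :: "'a::euclidean_space"
  assumes "z \<noteq> 0" "v \<in> span {z}"
  shows "v = (inner v z / inner z z) *\<^sub>R z"
proof -
  obtain c where c: "v = c *\<^sub>R z" using assms(2) by (auto simp: span_singleton)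
  have "inner z z \<noteq> 0" using assms(1) by simp
  then show ?thesis using c by (simp add: inner_commute)
qed

lemma bil_antisym:
  fixes b :: "'a::euclidean_space \<Rightarrow> 'a \<Rightarrow> 'a"
  assumes lin1: "\<And>x. linear (b x)" and lin2: "\<And>y. linear (\<lambda>x. b x y)" and alt: "\<And>x. b x x = 0"
  shows "b x y = - b y x"
proof -
  have "b (x + y) (x + y) = b x x + b x y + b y x + b y y"
    using linear_add[OF lin1, of "x+y"] linear_add[OF lin2, of y x] linear_add[OF lin2, of x x y]
    by (simp add: algebra_simps)
  then show ?thesis using alt[of "x+y"] alt[of x] alt[of y] by (simp add: eq_neg_iff_add_eq_0)
qed

lemma symp_basis:
  fixes b :: "'a::euclidean_space \<Rightarrow> 'a \<Rightarrow> 'a" and z :: 'a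
  assumes lin1: "\<And>x. linear (b x)" and lin2: "\<And>y. linear (\<lambda>x. b x y)" and alt: "\<And>x. b x x = 0"
    and z: "z \<noteq> 0"
  shows "subspace W \<Longrightarrow> (\<forall>x\<in>W. \<forall>y\<in>W. b x y \<in> span {z}) \<Longrightarrow> (\<forall>x\<in>W. x \<noteq> 0 \<longrightarrow> (\<exists>y\<in>W. b x y \<noteq> 0)) \<Longrightarrow>
    \<exists>(m::nat) xs ys. (\<forall>p<m. xs p \<in> W \<and> ys p \<in> W) \<and>
      (\<forall>p<m. \<forall>q<m. b (xs p) (ys q) = (if p = q then z else 0) \<and> b (xs p) (xs q) = 0 \<and> b (ys p) (ys q) = 0) \<and>
      W \<subseteq> span (xs ` {..<m} \<union> ys ` {..<m})"
proof (induct "dim W" arbitrary: W rule: less_induct)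
  case less
  note sub = less.prems(1) and val = less.prems(2) and nd = less.prems(3)
  have anti: "\<And>x y. b x y = - b y x" using bil_antisym[OF lin1 lin2 alt] .
  define om where "om x y = inner (b x y) z / inner z z" for x y
  have omz: "b x y = om x y *\<^sub>R z" if "x \<in> W" "y \<in> W" for x y
    using span_singleton_coeff[OF z] val that unfolding om_def by blast
  show ?case
  proof (cases "W \<subseteq> {0}")
    case True
    show ?thesis
      apply (rule exI[of _ "0::nat"], rule exI[of _ "\<lambda>_. 0"], rule exI[of _ "\<lambda>_. 0"])
      using True span_zero by auto
  next
    case False
    then obtain x where x: "x \<in> W" "x \<noteq> 0" by auto
    then obtain y0 where y0: "y0 \<in> W" "b x y0 \<noteq> 0" using nd by auto
    define c where "c = om x y0"
    have c0: "c \<noteq> 0" using y0 omz[OF x(1) y0(1)] c_def by auto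
    define y where "y = y0 /\<^sub>R c"
    have yW: "y \<in> W" using y0 sub unfolding y_def by (simp add: subspace_scale)
    have bxy: "b x y = z" using omz[OF x(1) y0(1)] c0 unfolding y_def c_def[symmetric]
      by (simp add: linear_scale[OF lin1])
    have byx: "b y x = - z" using anti[of y x] bxy by simp
    have bxx: "b x x = 0" "b y y = 0" using alt by auto
    define W' where "W' = {w\<in>W. b x w = 0 \<and> b y w = 0}"
    have subW': "subspace W'" unfolding W'_def subspace_def
      using sub linear_add[OF lin1] linear_scale[OF lin1] linear_0[OF lin1]
      by (auto simp: subspace_def)
    have W'W: "W' \<subseteq> W" unfolding W'_def by auto
    have xnot: "x \<notin> W'" using byx z unfolding W'_def by auto
    have "span W' \<subset> span W" using W'W xnot x(1) subW' sub by (metis psubsetI span_eq_iff)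
    then have dimlt: "dim W' < dim W" by (rule dim_psubset)
    have nd': "\<forall>w\<in>W'. w \<noteq> 0 \<longrightarrow> (\<exists>u\<in>W'. b w u \<noteq> 0)"
    proof (intro ballI impI)
      fix w assume w: "w \<in> W'" "w \<noteq> 0"
      then have wW: "w \<in> W" using W'W by auto
      obtain u where u: "u \<in> W" "b w u \<noteq> 0" using nd wW w(2) by auto
      define u' where "u' = u - om x u *\<^sub>R y + om y u *\<^sub>R x"
      have u'W: "u' \<in> W" unfolding u'_def using sub u(1) x(1) yW
        by (intro subspace_add subspace_diff subspace_scale) auto
      have "b x u' = b x u - om x u *\<^sub>R b x y + om y u *\<^sub>R b x x"
        unfolding u'_def by (simp add: linear_add[OF lin1] linear_diff[OF lin1] linear_scale[OF lin1])
      also have "\<dots> = 0" using omz[OF x(1) u(1)] bxy bxx by simp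
      finally have 1: "b x u' = 0" .
      have "b y u' = b y u - om x u *\<^sub>R b y y + om y u *\<^sub>R b y x"
        unfolding u'_def by (simp add: linear_add[OF lin1] linear_diff[OF lin1] linear_scale[OF lin1])
      also have "\<dots> = 0" using omz[OF yW u(1)] byx bxx by simp
      finally have 2: "b y u' = 0" .
      have "b w u' = b w u - om x u *\<^sub>R b w y + om y u *\<^sub>R b w x"
        unfolding u'_def by (simp add: linear_add[OF lin1] linear_diff[OF lin1] linear_scale[OF lin1])
      also have "b w y = 0" using anti[of w y] w(1) unfolding W'_def by simp
      also have "b w x = 0" using anti[of w x] w(1) unfolding W'_def by simp
      finally have "b w u' \<noteq> 0" using u(2) by simp
      moreover have "u' \<in> W'" using 1 2 u'W unfolding W'_def by auto
      ultimately show "\<exists>u\<in>W'. b w u \<noteq> 0" by blast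
    qed
    have val': "\<forall>x\<in>W'. \<forall>y\<in>W'. b x y \<in> span {z}" using val W'W by auto
    obtain m :: nat and xs ys where IH1: "\<forall>p<m. xs p \<in> W' \<and> ys p \<in> W'"
      and IH2: "\<forall>p<m. \<forall>q<m. b (xs p) (ys q) = (if p = q then z else 0) \<and> b (xs p) (xs q) = 0 \<and> b (ys p) (ys q) = 0"
      and IH3: "W' \<subseteq> span (xs ` {..<m} \<union> ys ` {..<m})"
      using less.hyps[OF dimlt subW' val' nd'] by blast
    define xs' where "xs' = xs(m := x)"
    define ys' where "ys' = ys(m := y)"
    have A: "\<forall>p<Suc m. xs' p \<in> W \<and> ys' p \<in> W"
      using IH1 W'W x(1) yW unfolding xs'_def ys'_def by (auto simp: less_Suc_eq)
    have B: "\<forall>p<Suc m. \<forall>q<Suc m. b (xs' p) (ys' q) = (if p = q then z else 0) \<and> b (xs' p) (xs' q) = 0 \<and> b (ys' p) (ys' q) = 0"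
    proof (intro allI impI)
      fix p q assume p: "p < Suc m" and q: "q < Suc m"
      have inW': "\<And>r. r < m \<Longrightarrow> b x (xs r) = 0 \<and> b y (xs r) = 0 \<and> b x (ys r) = 0 \<and> b y (ys r) = 0"
        using IH1 unfolding W'_def by auto
      have inW'': "\<And>r. r < m \<Longrightarrow> b (xs r) x = 0 \<and> b (xs r) y = 0 \<and> b (ys r) x = 0 \<and> b (ys r) y = 0"
        using inW' anti by (metis neg_equal_0_iff_equal)
      show "b (xs' p) (ys' q) = (if p = q then z else 0) \<and> b (xs' p) (xs' q) = 0 \<and> b (ys' p) (ys' q) = 0"
        using p q IH2 inW' inW'' bxy bxx unfolding xs'_def ys'_def
        by (auto simp: less_Suc_eq)
    qed
    have C: "W \<subseteq> span (xs' ` {..<Suc m} \<union> ys' ` {..<Suc m})"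
    proof
      fix u assume u: "u \<in> W"
      define u' where "u' = u - om x u *\<^sub>R y + om y u *\<^sub>R x"
      have u'W: "u' \<in> W" unfolding u'_def using sub u x(1) yW
        by (intro subspace_add subspace_diff subspace_scale) auto
      have "b x u' = b x u - om x u *\<^sub>R b x y + om y u *\<^sub>R b x x"
        unfolding u'_def by (simp add: linear_add[OF lin1] linear_diff[OF lin1] linear_scale[OF lin1])
      also have "\<dots> = 0" using omz[OF x(1) u] bxy bxx by simp
      finally have 1: "b x u' = 0" .
      have "b y u' = b y u - om x u *\<^sub>R b y y + om y u *\<^sub>R b y x"
        unfolding u'_def by (simp add: linear_add[OF lin1] linear_diff[OF lin1] linear_scale[OF lin1])
      also have "\<dots> = 0" using omz[OF yW u] byx bxx by simp
      finally have 2: "b y u' = 0" .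
      have "u' \<in> W'" using 1 2 u'W unfolding W'_def by auto
      then have "u' \<in> span (xs ` {..<m} \<union> ys ` {..<m})" using IH3 by auto
      moreover have "span (xs ` {..<m} \<union> ys ` {..<m}) \<subseteq> span (xs' ` {..<Suc m} \<union> ys' ` {..<Suc m})"
        by (rule span_mono) (auto simp: xs'_def ys'_def image_def)
      ultimately have s1: "u' \<in> span (xs' ` {..<Suc m} \<union> ys' ` {..<Suc m})" by auto
      have s2: "x \<in> span (xs' ` {..<Suc m} \<union> ys' ` {..<Suc m})" "y \<in> span (xs' ` {..<Suc m} \<union> ys' ` {..<Suc m})"
        by (rule span_base, force simp: xs'_def ys'_def)+
      have "u = u' + om x u *\<^sub>R y - om y u *\<^sub>R x" unfolding u'_def by simp
      then show "u \<in> span (xs' ` {..<Suc m} \<union> ys' ` {..<Suc m})"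
        using s1 s2 by (metis span_add span_diff span_scale)
    qed
    show ?thesis using A B C by blast
  qed
qed



datatype idx = IX nat | IY nat | IU nat | IV nat | F1 | F2

definition Kset :: "nat \<Rightarrow> nat \<Rightarrow> idx set" where
  "Kset m k = IX ` {..<m} \<union> IY ` {..<m} \<union> IU ` {..<k} \<union> IV ` {..<k} \<union> {F1, F2}"

lemma finite_Kset[simp]: "finite (Kset m k)" by (simp add: Kset_def)

lemma sum_K:
  fixes h :: "idx \<Rightarrow> 'b::comm_monoid_add"
  shows "sum h (Kset m k) = (\<Sum>p<m. h (IX p)) + (\<Sum>p<m. h (IY p)) + (\<Sum>q<k. h (IU q)) + (\<Sum>q<k. h (IV q)) + h F1 + h F2"
proof -
  let ?A = "IX ` {..<m}" and ?B = "IY ` {..<m}" and ?C = "IU ` {..<k}" and ?D = "IV ` {..<k}"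
  have e: "Kset m k = ((((?A \<union> ?B) \<union> ?C) \<union> ?D) \<union> {F1}) \<union> {F2}" unfolding Kset_def by auto
  have "sum h (Kset m k) = sum h ?A + sum h ?B + sum h ?C + sum h ?D + sum h {F1} + sum h {F2}"
    unfolding e
    by (subst sum.union_disjoint, simp, simp, fastforce)+ (rule refl)
  also have "\<dots> = (\<Sum>p<m. h (IX p)) + (\<Sum>p<m. h (IY p)) + (\<Sum>q<k. h (IU q)) + (\<Sum>q<k. h (IV q)) + h F1 + h F2"
    by (simp add: sum.reindex inj_on_def)
  finally show ?thesis .
qed

fun st1 :: "idx \<Rightarrow> idx \<Rightarrow> real" where
  "st1 (IX p) (IY q) = (if p = q then 1 else 0)"
| "st1 (IY p) (IX q) = (if p = q then -1 else 0)"
| "st1 _ _ = 0"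

fun st2 :: "idx \<Rightarrow> idx \<Rightarrow> real" where
  "st2 (IU p) (IV q) = (if p = q then 1 else 0)"
| "st2 (IV p) (IU q) = (if p = q then -1 else 0)"
| "st2 _ _ = 0"

fun n1 :: "idx \<Rightarrow> real" where
  "n1 (IX _) = 1" | "n1 (IY _) = 1" | "n1 _ = 0"

fun n2 :: "idx \<Rightarrow> real" where
  "n2 (IU _) = 1" | "n2 (IV _) = 1" | "n2 _ = 0"

lemma ifmult: "(if x = p then (c::real) else 0) * (if y = p then d else 0) = (if x = p then (if y = x then c * d else 0) else 0)"
  by auto

lemma G1: "a \<in> Kset m k \<Longrightarrow> b \<in> Kset m k \<Longrightarrow> (\<Sum>c\<in>Kset m k. st1 a c * st1 b c) = (if a = b then n1 a else 0)"
  unfolding sum_K by (cases a; cases b) (auto simp: Kset_def ifmult)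

lemma G2: "a \<in> Kset m k \<Longrightarrow> b \<in> Kset m k \<Longrightarrow> (\<Sum>c\<in>Kset m k. st2 a c * st2 b c) = (if a = b then n2 a else 0)"
  unfolding sum_K by (cases a; cases b) (auto simp: Kset_def ifmult)

lemma st12: "st1 a b * st2 a b = 0"
  by (cases a; cases b) auto

lemma sum_n1: "(\<Sum>a\<in>Kset m k. n1 a) = 2 * real m" by (simp add: sum_K)
lemma sum_n2: "(\<Sum>a\<in>Kset m k. n2 a) = 2 * real k" by (simp add: sum_K)



lemma sum_nth_distinct: "distinct ks \<Longrightarrow> (\<Sum>i<length ks. f (ks!i)) = sum f (set ks)"
  by (simp add: sum.distinct_set_conv_list sum_list_sum_nth atLeast0LessThan)

lemma bilin_ext:
  fixes f g :: "'a::euclidean_space \<Rightarrow> 'a \<Rightarrow> 'b::real_vector"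
  assumes "\<And>x. linear (f x)" "\<And>y. linear (\<lambda>x. f x y)" "\<And>x. linear (g x)" "\<And>y. linear (\<lambda>x. g x y)"
    "span B = UNIV" "\<And>a b. a\<in>B \<Longrightarrow> b\<in>B \<Longrightarrow> f a b = g a b"
  shows "f x y = g x y"
proof -
  have 1: "f a y = g a y" if "a \<in> B" for a
    using real_vector.linear_eq_on_span[OF assms(1)[of a] assms(3)[of a], of B y] assms(5,6) that by auto
  show ?thesis using real_vector.linear_eq_on_span[OF assms(2)[of y] assms(4)[of y], of B x] 1 assms(5) by auto
qed

lemma if01: "x * (if P then 1 else 0) = (if P then x else (0::real))" by simp
lemma if01': "(if P then 1 else 0) * x = (if P then x else (0::real))" by simp

lemma swap3:
  fixes f :: "idx \<Rightarrow> idx \<Rightarrow> real"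
  assumes "finite K"
  shows "(\<Sum>c\<in>K. (\<Sum>a\<in>K. f a c * x a) * (\<Sum>b\<in>K. f b c * y b)) = (\<Sum>a\<in>K. \<Sum>b\<in>K. x a * y b * (\<Sum>c\<in>K. f a c * f b c))"
proof -
  have "(\<Sum>c\<in>K. (\<Sum>a\<in>K. f a c * x a) * (\<Sum>b\<in>K. f b c * y b)) = (\<Sum>c\<in>K. \<Sum>a\<in>K. \<Sum>b\<in>K. x a * y b * (f a c * f b c))"
    by (simp add: sum_product mult_ac)
  also have "\<dots> = (\<Sum>a\<in>K. \<Sum>c\<in>K. \<Sum>b\<in>K. x a * y b * (f a c * f b c))" by (rule sum.swap)
  also have "\<dots> = (\<Sum>a\<in>K. \<Sum>b\<in>K. \<Sum>c\<in>K. x a * y b * (f a c * f b c))" by (rule sum.cong[OF refl], rule sum.swap)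
  also have "\<dots> = (\<Sum>a\<in>K. \<Sum>b\<in>K. x a * y b * (\<Sum>c\<in>K. f a c * f b c))" by (simp add: sum_distrib_left)
  finally show ?thesis .
qed

lemma twice_comb:
  fixes u v :: "'a::real_vector"
  shows "(2 * c) *\<^sub>R u + (2 * d) *\<^sub>R v = (c *\<^sub>R u + d *\<^sub>R v) + (c *\<^sub>R u + d *\<^sub>R v)"
proof -
  have 1: "(2 * c) *\<^sub>R u = c *\<^sub>R u + c *\<^sub>R u" by (metis mult_2 scaleR_add_left)
  have 2: "(2 * d) *\<^sub>R v = d *\<^sub>R v + d *\<^sub>R v" by (metis mult_2 scaleR_add_left)
  show ?thesis unfolding 1 2 by (simp add: algebra_simps)
qed

lemma einstein_from_basis:
  fixes br :: "'a::euclidean_space \<Rightarrow> 'a \<Rightarrow> 'a" and bv :: "idx \<Rightarrow> 'a" and m k :: nat and s1 s2 :: real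
  assumes lin1: "\<And>x. linear (br x)" and lin2: "\<And>y. linear (\<lambda>x. br x y)"
    and inj: "inj_on bv (Kset m k)" and ind: "independent (bv ` Kset m k)" and spn: "span (bv ` Kset m k) = UNIV"
    and s1: "s1^2 = real k + 2" and s2: "s2^2 = real m + 2"
    and tab: "\<And>a b. a \<in> Kset m k \<Longrightarrow> b \<in> Kset m k \<Longrightarrow> br (bv a) (bv b) = (s1 * st1 a b) *\<^sub>R bv F1 + (s2 * st2 a b) *\<^sub>R bv F2"
  shows "einstein_nilradical br"
proof -
  define K where "K = Kset m k"
  have finK: "finite K" by (simp add: K_def)
  have F1K: "F1 \<in> K" and F2K: "F2 \<in> K" by (auto simp: K_def Kset_def)
  have cardK: "card K = DIM('a)"
  proof -
    have "card (bv ` K) = dim (span (bv ` K))" unfolding K_def by (rule dim_span_eq_card_independent[OF ind, symmetric])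
    also have "\<dots> = DIM('a)" using spn K_def by (simp add: dim_UNIV)
    finally show ?thesis using card_image[OF inj] K_def by simp
  qed
  obtain h where h: "bij_betw h K (Basis :: 'a set)"
    using finite_same_card_bij[OF finK finite_Basis[where 'a='a]] cardK by auto
  obtain T where linT: "linear T" and Tv: "\<forall>v\<in>bv ` K. T v = h (the_inv_into K bv v)"
    using linear_independent_extend[OF ind, of "\<lambda>v. h (the_inv_into K bv v)"] unfolding K_def by blast
  have Tbv: "T (bv a) = h a" if "a \<in> K" for a
    using Tv that the_inv_into_f_f[OF inj[folded K_def] that] by auto
  have surjT: "surj T"
  proof -
    have "Basis \<subseteq> range T"
    proof
      fix b :: 'a assume "b \<in> Basis"
      then obtain a where "a \<in> K" "b = h a" using h unfolding bij_betw_def by auto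
      then show "b \<in> range T" using Tbv by (metis rangeI)
    qed
    moreover have "subspace (range T)" by (rule linear_subspace_image[OF linT subspace_UNIV])
    ultimately have "span Basis \<subseteq> range T" by (rule span_minimal)
    then show ?thesis by (simp add: span_Basis top.extremum_uniqueI)
  qed
  have injT: "inj T" by (rule linear_surjective_imp_injective[OF linT surjT]) simp
  define ip where "ip x y = inner (T x) (T y)" for x y
  have ipsym: "ip x y = ip y x" for x y by (simp add: ip_def inner_commute)
  have blT: "bounded_linear T" using linT linear_conv_bounded_linear by auto
  have linip: "linear (ip x)" for x
    unfolding ip_def using bounded_linear_inner_right_comp[OF blT] linear_conv_bounded_linear by blast
  have linip2: "linear (\<lambda>x. ip x y)" for y
    using linip[of y] by (simp add: ipsym[of _ y])
  have ippos: "ip x x > 0" if "x \<noteq> 0" for x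
  proof -
    have "T x \<noteq> 0" using injT that linear_0[OF linT] by (metis injD)
    then show ?thesis by (simp add: ip_def)
  qed
  have orth: "ip (bv a) (bv b) = (if a = b then 1 else 0)" if "a \<in> K" "b \<in> K" for a b
  proof -
    have "h a \<in> Basis" "h b \<in> Basis" using h that unfolding bij_betw_def by auto
    moreover have "h a = h b \<longleftrightarrow> a = b" using h that unfolding bij_betw_def inj_on_def by auto
    ultimately show ?thesis unfolding ip_def using Tbv that by (simp add: inner_Basis)
  qed
  have pars: "ip u v = (\<Sum>a\<in>K. ip u (bv a) * ip v (bv a))" for u v
  proof -
    have "ip u v = (\<Sum>b\<in>Basis. inner (T u) b * inner (T v) b)" unfolding ip_def by (rule euclidean_inner)
    also have "\<dots> = (\<Sum>a\<in>K. inner (T u) (h a) * inner (T v) (h a))"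
      using sum.reindex_bij_betw[OF h, of "\<lambda>b. inner (T u) b * inner (T v) b"] by simp
    also have "\<dots> = (\<Sum>a\<in>K. ip u (bv a) * ip v (bv a))" by (rule sum.cong) (simp_all add: ip_def Tbv)
    finally show ?thesis .
  qed
  obtain ks where ks: "set ks = K" "distinct ks" using finite_distinct_list[OF finK] by blast
  define es where "es = map bv ks"
  have lenes: "length es = DIM('a)" using ks cardK distinct_card[OF ks(2)] by (simp add: es_def)
  have onb: "orthonormal_basis ip es"
    unfolding orthonormal_basis_def
  proof (intro conjI allI impI)
    show "length es = DIM('a)" by (rule lenes)
    fix i j assume i: "i < length es" and j: "j < length es"
    have "ks ! i \<in> K" "ks ! j \<in> K" using i j ks by (auto simp: es_def)
    moreover have "ks ! i = ks ! j \<longleftrightarrow> i = j" using i j ks(2) by (simp add: es_def nth_eq_iff_index_eq)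
    ultimately show "ip (es ! i) (es ! j) = (if i = j then 1 else 0)" using i j orth by (simp add: es_def)
  qed
  have ipinner: "inner_product ip" unfolding inner_product_def using linip ipsym ippos by blast
  have sumes: "(\<Sum>i<length es. f (es!i)) = (\<Sum>a\<in>K. f (bv a))" for f :: "'a \<Rightarrow> real"
    using sum_nth_distinct[OF ks(2), of "\<lambda>a. f (bv a)"] ks by (simp add: es_def)
  define co where "co X a = ip X (bv a)" for X a
  have co_add: "co (X + Y) a = co X a + co Y a" for X Y a unfolding co_def using linear_add[OF linip2] by blast
  have co_scale: "co (c *\<^sub>R X) a = c * co X a" for c X a unfolding co_def using linear_scale[OF linip2] by simp
  have coB: "co (bv c) a = (if c = a then 1 else 0)" if "c \<in> K" "a \<in> K" for c a
    unfolding co_def using orth that by simp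
  define w1 where "w1 X Y = (\<Sum>a\<in>K. \<Sum>b\<in>K. st1 a b * co X a * co Y b)" for X Y
  define w2 where "w2 X Y = (\<Sum>a\<in>K. \<Sum>b\<in>K. st2 a b * co X a * co Y b)" for X Y
  have w1_add1: "w1 (X + X') Y = w1 X Y + w1 X' Y" and w1_add2: "w1 X (Y + Y') = w1 X Y + w1 X Y'"
   and w2_add1: "w2 (X + X') Y = w2 X Y + w2 X' Y" and w2_add2: "w2 X (Y + Y') = w2 X Y + w2 X Y'" for X X' Y Y'
    unfolding w1_def w2_def co_add by (simp_all add: algebra_simps sum.distrib)
  have w1_sc1: "w1 (c *\<^sub>R X) Y = c * w1 X Y" and w1_sc2: "w1 X (c *\<^sub>R Y) = c * w1 X Y"
   and w2_sc1: "w2 (c *\<^sub>R X) Y = c * w2 X Y" and w2_sc2: "w2 X (c *\<^sub>R Y) = c * w2 X Y" for c X Y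
    unfolding w1_def w2_def co_scale by (simp_all add: sum_distrib_left mult_ac)
  have w1B: "w1 (bv c) (bv d) = st1 c d" and w2B: "w2 (bv c) (bv d) = st2 c d" if "c \<in> K" "d \<in> K" for c d
    unfolding w1_def w2_def using that by (simp_all add: coB if01 sum.delta sum.delta' finK cong: sum.cong)
  define f1 where "f1 = bv F1"
  define f2 where "f2 = bv F2"
  have brf: "br X Y = (s1 * w1 X Y) *\<^sub>R f1 + (s2 * w2 X Y) *\<^sub>R f2" for X Y
  proof (rule bilin_ext[where B = "bv ` K" and f = br and g = "\<lambda>X Y. (s1 * w1 X Y) *\<^sub>R f1 + (s2 * w2 X Y) *\<^sub>R f2"])
    show "linear (br x)" for x by (rule lin1)
    show "linear (\<lambda>x. br x y)" for y by (rule lin2)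
    show "linear (\<lambda>Y. (s1 * w1 x Y) *\<^sub>R f1 + (s2 * w2 x Y) *\<^sub>R f2)" for x
      by (rule linearI) (simp_all add: w1_add2 w2_add2 w1_sc2 w2_sc2 algebra_simps)
    show "linear (\<lambda>X. (s1 * w1 X y) *\<^sub>R f1 + (s2 * w2 X y) *\<^sub>R f2)" for y
      by (rule linearI) (simp_all add: w1_add1 w2_add1 w1_sc1 w2_sc1 algebra_simps)
    show "span (bv ` K) = UNIV" using spn K_def by simp
    show "br a b = (s1 * w1 a b) *\<^sub>R f1 + (s2 * w2 a b) *\<^sub>R f2" if "a \<in> bv ` K" "b \<in> bv ` K" for a b
      using that tab w1B w2B unfolding K_def f1_def f2_def by auto
  qed
  have coF: "co f1 F1 = 1" "co f1 F2 = 0" "co f2 F1 = 0" "co f2 F2 = 1"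
    unfolding f1_def f2_def using coB F1K F2K by auto
  have ipL: "ip (\<alpha> *\<^sub>R f1 + \<beta> *\<^sub>R f2) V = \<alpha> * co V F1 + \<beta> * co V F2" for \<alpha> \<beta> V
  proof -
    have "ip (\<alpha> *\<^sub>R f1 + \<beta> *\<^sub>R f2) V = \<alpha> * ip f1 V + \<beta> * ip f2 V"
      using linear_add[OF linip2[of V]] linear_scale[OF linip2[of V]] by simp
    then show ?thesis unfolding co_def f1_def f2_def using ipsym by simp
  qed
  have ipff: "ip (\<alpha> *\<^sub>R f1 + \<beta> *\<^sub>R f2) (\<gamma> *\<^sub>R f1 + \<delta> *\<^sub>R f2) = \<alpha> * \<gamma> + \<beta> * \<delta>" for \<alpha> \<beta> \<gamma> \<delta>
    unfolding ipL by (simp add: co_add co_scale coF)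
  have w1c: "w1 X (bv c) = (\<Sum>a\<in>K. st1 a c * co X a)" and w2c: "w2 X (bv c) = (\<Sum>a\<in>K. st2 a c * co X a)"
    if "c \<in> K" for X c
    unfolding w1_def w2_def using that by (simp_all add: coB if01 sum.delta sum.delta' finK cong: sum.cong)
  have S1: "(\<Sum>c\<in>K. w1 X (bv c) * w1 Y (bv c)) = (\<Sum>a\<in>K. n1 a * (co X a * co Y a))" for X Y
  proof -
    have "(\<Sum>c\<in>K. w1 X (bv c) * w1 Y (bv c)) = (\<Sum>c\<in>K. (\<Sum>a\<in>K. st1 a c * co X a) * (\<Sum>b\<in>K. st1 b c * co Y b))"
      by (rule sum.cong) (simp_all add: w1c)
    also have "\<dots> = (\<Sum>a\<in>K. \<Sum>b\<in>K. co X a * co Y b * (\<Sum>c\<in>K. st1 a c * st1 b c))" by (rule swap3[OF finK])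
    also have "\<dots> = (\<Sum>a\<in>K. \<Sum>b\<in>K. co X a * co Y b * (if a = b then n1 a else 0))"
      by (intro sum.cong refl) (simp add: G1 K_def)
    also have "\<dots> = (\<Sum>a\<in>K. n1 a * (co X a * co Y a))"
      by (simp add: if_distrib[of "\<lambda>t. _ * t"] sum.delta finK mult_ac cong: if_cong)
    finally show ?thesis .
  qed
  have S2: "(\<Sum>c\<in>K. w2 X (bv c) * w2 Y (bv c)) = (\<Sum>a\<in>K. n2 a * (co X a * co Y a))" for X Y
  proof -
    have "(\<Sum>c\<in>K. w2 X (bv c) * w2 Y (bv c)) = (\<Sum>c\<in>K. (\<Sum>a\<in>K. st2 a c * co X a) * (\<Sum>b\<in>K. st2 b c * co Y b))"
      by (rule sum.cong) (simp_all add: w2c)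
    also have "\<dots> = (\<Sum>a\<in>K. \<Sum>b\<in>K. co X a * co Y b * (\<Sum>c\<in>K. st2 a c * st2 b c))" by (rule swap3[OF finK])
    also have "\<dots> = (\<Sum>a\<in>K. \<Sum>b\<in>K. co X a * co Y b * (if a = b then n2 a else 0))"
      by (intro sum.cong refl) (simp add: G2 K_def)
    also have "\<dots> = (\<Sum>a\<in>K. n2 a * (co X a * co Y a))"
      by (simp add: if_distrib[of "\<lambda>t. _ * t"] sum.delta finK mult_ac cong: if_cong)
    finally show ?thesis .
  qed
  have Q1: "(\<Sum>c\<in>K. \<Sum>d\<in>K. st1 c d * st1 c d) = 2 * real m"
  proof -
    have "(\<Sum>c\<in>K. \<Sum>d\<in>K. st1 c d * st1 c d) = (\<Sum>c\<in>K. n1 c)"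
      by (rule sum.cong) (simp_all add: G1 K_def)
    then show ?thesis using sum_n1 K_def by simp
  qed
  have Q2: "(\<Sum>c\<in>K. \<Sum>d\<in>K. st2 c d * st2 c d) = 2 * real k"
  proof -
    have "(\<Sum>c\<in>K. \<Sum>d\<in>K. st2 c d * st2 c d) = (\<Sum>c\<in>K. n2 c)"
      by (rule sum.cong) (simp_all add: G2 K_def)
    then show ?thesis using sum_n2 K_def by simp
  qed
  have ric: "ricci_form br ip es X Y = - (1/2) * (s1^2 * (\<Sum>a\<in>K. n1 a * (co X a * co Y a)) + s2^2 * (\<Sum>a\<in>K. n2 a * (co X a * co Y a)))
      + (1/4) * (s1^2 * (co X F1 * co Y F1) * (2 * real m) + s2^2 * (co X F2 * co Y F2) * (2 * real k))" for X Y
  proof -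
    have t1: "(\<Sum>i<length es. ip (br X (es!i)) (br Y (es!i))) = s1^2 * (\<Sum>a\<in>K. n1 a * (co X a * co Y a)) + s2^2 * (\<Sum>a\<in>K. n2 a * (co X a * co Y a))"
    proof -
      have "(\<Sum>i<length es. ip (br X (es!i)) (br Y (es!i))) = (\<Sum>c\<in>K. ip (br X (bv c)) (br Y (bv c)))"
        by (rule sumes)
      also have "\<dots> = (\<Sum>c\<in>K. s1^2 * (w1 X (bv c) * w1 Y (bv c)) + s2^2 * (w2 X (bv c) * w2 Y (bv c)))"
        by (rule sum.cong, simp, subst (1 2) brf, simp add: ipff power2_eq_square mult_ac)
      also have "\<dots> = s1^2 * (\<Sum>c\<in>K. w1 X (bv c) * w1 Y (bv c)) + s2^2 * (\<Sum>c\<in>K. w2 X (bv c) * w2 Y (bv c))"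
        by (simp add: sum.distrib sum_distrib_left)
      finally show ?thesis by (simp add: S1 S2)
    qed
    have t2: "(\<Sum>i<length es. \<Sum>j<length es. ip (br (es!i) (es!j)) X * ip (br (es!i) (es!j)) Y)
       = s1^2 * (co X F1 * co Y F1) * (2 * real m) + s2^2 * (co X F2 * co Y F2) * (2 * real k)"
    proof -
      have "(\<Sum>i<length es. \<Sum>j<length es. ip (br (es!i) (es!j)) X * ip (br (es!i) (es!j)) Y)
          = (\<Sum>i<length es. \<Sum>d\<in>K. ip (br (es!i) (bv d)) X * ip (br (es!i) (bv d)) Y)"
        by (rule sum.cong[OF refl], rule sumes)
      also have "\<dots> = (\<Sum>c\<in>K. \<Sum>d\<in>K. ip (br (bv c) (bv d)) X * ip (br (bv c) (bv d)) Y)"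
        by (rule sumes)
      also have "\<dots> = (\<Sum>c\<in>K. \<Sum>d\<in>K. s1^2 * (co X F1 * co Y F1) * (st1 c d * st1 c d) + s2^2 * (co X F2 * co Y F2) * (st2 c d * st2 c d))"
      proof (intro sum.cong refl)
        fix c d assume c: "c \<in> K" and d: "d \<in> K"
        have "br (bv c) (bv d) = (s1 * st1 c d) *\<^sub>R f1 + (s2 * st2 c d) *\<^sub>R f2"
          using tab c d unfolding K_def f1_def f2_def by auto
        then have "ip (br (bv c) (bv d)) X * ip (br (bv c) (bv d)) Y
          = (s1 * st1 c d * co X F1 + s2 * st2 c d * co X F2) * (s1 * st1 c d * co Y F1 + s2 * st2 c d * co Y F2)"
          by (simp add: ipL)
        also have "\<dots> = s1^2 * (co X F1 * co Y F1) * (st1 c d * st1 c d) + s2^2 * (co X F2 * co Y F2) * (st2 c d * st2 c d)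
           + s1 * s2 * (co X F1 * co Y F2 + co X F2 * co Y F1) * (st1 c d * st2 c d)"
          by (simp add: algebra_simps power2_eq_square)
        also have "\<dots> = s1^2 * (co X F1 * co Y F1) * (st1 c d * st1 c d) + s2^2 * (co X F2 * co Y F2) * (st2 c d * st2 c d)"
          by (simp add: st12)
        finally show "ip (br (bv c) (bv d)) X * ip (br (bv c) (bv d)) Y = s1^2 * (co X F1 * co Y F1) * (st1 c d * st1 c d) + s2^2 * (co X F2 * co Y F2) * (st2 c d * st2 c d)" .
      qed
      also have "\<dots> = s1^2 * (co X F1 * co Y F1) * (\<Sum>c\<in>K. \<Sum>d\<in>K. st1 c d * st1 c d) + s2^2 * (co X F2 * co Y F2) * (\<Sum>c\<in>K. \<Sum>d\<in>K. st2 c d * st2 c d)"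
        by (simp add: sum.distrib sum_distrib_left)
      finally show ?thesis by (simp add: Q1 Q2)
    qed
    show ?thesis unfolding ricci_form_def t1 t2 ..
  qed
  define a1 :: real where "a1 = (real m + 1) * (real k + 2) / 2"
  define a2 :: real where "a2 = (real k + 1) * (real m + 2) / 2"
  define lam :: real where "lam = - (real m + 2) * (real k + 2) / 2"
  define dd :: "idx \<Rightarrow> real" where
    "dd a = (case a of IX _ \<Rightarrow> a1 | IY _ \<Rightarrow> a1 | IU _ \<Rightarrow> a2 | IV _ \<Rightarrow> a2 | F1 \<Rightarrow> 2 * a1 | F2 \<Rightarrow> 2 * a2)" for a
  define D where "D X = (\<Sum>a\<in>K. (dd a * co X a) *\<^sub>R bv a)" for X
  have linD: "linear D"
  proof (rule linearI)
    show "D (X + Y) = D X + D Y" for X Y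
      unfolding D_def co_add by (simp add: distrib_left scaleR_add_left sum.distrib)
    show "D (c *\<^sub>R X) = c *\<^sub>R D X" for c X
      unfolding D_def co_scale by (simp add: scaleR_sum_right mult_ac)
  qed
  have coD: "co (D X) b = dd b * co X b" if "b \<in> K" for X b
  proof -
    have "co (D X) b = (\<Sum>a\<in>K. ip ((dd a * co X a) *\<^sub>R bv a) (bv b))"
      unfolding co_def D_def by (rule linear_sum[OF linip2])
    also have "\<dots> = (\<Sum>a\<in>K. (dd a * co X a) * (if a = b then 1 else 0))"
      by (rule sum.cong[OF refl]) (simp add: linear_scale[OF linip2] orth that)
    also have "\<dots> = dd b * co X b" by (simp add: if01 sum.delta finK that)
    finally show ?thesis .
  qed
  have Df1: "D f1 = dd F1 *\<^sub>R f1"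
  proof -
    have "D f1 = (\<Sum>a\<in>K. (if F1 = a then dd a *\<^sub>R bv a else 0))"
      unfolding D_def f1_def by (rule sum.cong[OF refl]) (simp add: coB F1K)
    then show ?thesis by (simp add: sum.delta' finK F1K f1_def)
  qed
  have Df2: "D f2 = dd F2 *\<^sub>R f2"
  proof -
    have "D f2 = (\<Sum>a\<in>K. (if F2 = a then dd a *\<^sub>R bv a else 0))"
      unfolding D_def f2_def by (rule sum.cong[OF refl]) (simp add: coB F2K)
    then show ?thesis by (simp add: sum.delta' finK F2K f2_def)
  qed
  have sd1: "st1 a b * dd a = a1 * st1 a b" "st1 a b * dd b = a1 * st1 a b" for a b
    by (cases a; cases b; simp add: dd_def)+
  have sd2: "st2 a b * dd a = a2 * st2 a b" "st2 a b * dd b = a2 * st2 a b" for a b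
    by (cases a; cases b; simp add: dd_def)+
  have w1D: "w1 (D X) Y = a1 * w1 X Y" "w1 X (D Y) = a1 * w1 X Y" for X Y
  proof -
    have "w1 (D X) Y = (\<Sum>a\<in>K. \<Sum>b\<in>K. (st1 a b * dd a) * co X a * co Y b)"
      unfolding w1_def by (intro sum.cong refl) (simp add: coD mult_ac)
    also have "\<dots> = a1 * w1 X Y" unfolding w1_def sd1 by (simp add: sum_distrib_left mult_ac)
    finally show "w1 (D X) Y = a1 * w1 X Y" .
    have "w1 X (D Y) = (\<Sum>a\<in>K. \<Sum>b\<in>K. (st1 a b * dd b) * co X a * co Y b)"
      unfolding w1_def by (intro sum.cong refl) (simp add: coD mult_ac)
    also have "\<dots> = a1 * w1 X Y" unfolding w1_def sd1 by (simp add: sum_distrib_left mult_ac)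
    finally show "w1 X (D Y) = a1 * w1 X Y" .
  qed
  have w2D: "w2 (D X) Y = a2 * w2 X Y" "w2 X (D Y) = a2 * w2 X Y" for X Y
  proof -
    have "w2 (D X) Y = (\<Sum>a\<in>K. \<Sum>b\<in>K. (st2 a b * dd a) * co X a * co Y b)"
      unfolding w2_def by (intro sum.cong refl) (simp add: coD mult_ac)
    also have "\<dots> = a2 * w2 X Y" unfolding w2_def sd2 by (simp add: sum_distrib_left mult_ac)
    finally show "w2 (D X) Y = a2 * w2 X Y" .
    have "w2 X (D Y) = (\<Sum>a\<in>K. \<Sum>b\<in>K. (st2 a b * dd b) * co X a * co Y b)"
      unfolding w2_def by (intro sum.cong refl) (simp add: coD mult_ac)
    also have "\<dots> = a2 * w2 X Y" unfolding w2_def sd2 by (simp add: sum_distrib_left mult_ac)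
    finally show "w2 X (D Y) = a2 * w2 X Y" .
  qed
  have der: "lie_derivation br D"
    unfolding lie_derivation_def
  proof (intro conjI allI)
    show "linear D" by (rule linD)
    fix X Y
    have "D (br X Y) = (s1 * w1 X Y) *\<^sub>R D f1 + (s2 * w2 X Y) *\<^sub>R D f2"
      by (simp add: brf linear_add[OF linD] linear_scale[OF linD])
    also have "\<dots> = (2 * a1 * s1 * w1 X Y) *\<^sub>R f1 + (2 * a2 * s2 * w2 X Y) *\<^sub>R f2"
      by (simp add: Df1 Df2 dd_def mult_ac)
    also have "\<dots> = ((a1 * s1 * w1 X Y) *\<^sub>R f1 + (a2 * s2 * w2 X Y) *\<^sub>R f2) + ((a1 * s1 * w1 X Y) *\<^sub>R f1 + (a2 * s2 * w2 X Y) *\<^sub>R f2)"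
      using twice_comb[of "a1 * s1 * w1 X Y" f1 "a2 * s2 * w2 X Y" f2] by (simp add: mult_ac)
    also have "\<dots> = br (D X) Y + br X (D Y)"
      by (simp add: brf w1D w2D mult_ac)
    finally show "D (br X Y) = br (D X) Y + br X (D Y)" .
  qed
  have Dsym: "ip (D X) Y = ip X (D Y)" for X Y
  proof -
    have "ip (D X) Y = (\<Sum>a\<in>K. dd a * co X a * co Y a)"
      by (subst pars, rule sum.cong[OF refl]) (simp add: coD[unfolded co_def] co_def)
    also have "\<dots> = ip X (D Y)"
      by (subst pars, rule sum.cong[OF refl]) (simp add: coD[unfolded co_def] co_def)
    finally show ?thesis .
  qed
  have ricD: "ricci_form br ip es X Y = ip (lam *\<^sub>R X + D X) Y" for X Y
  proof -
    define P where "P a = co X a * co Y a" for a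
    have r: "ip (lam *\<^sub>R X + D X) Y = (\<Sum>a\<in>K. (lam + dd a) * P a)"
      by (subst pars, rule sum.cong[OF refl])
        (simp add: coD[unfolded co_def] co_def P_def linear_add[OF linip2] linear_scale[OF linip2] algebra_simps)
    define r where "r a = - (1/2) * (s1^2 * n1 a + s2^2 * n2 a) + (1/2) * real m * s1^2 * (if a = F1 then 1 else 0)
         + (1/2) * real k * s2^2 * (if a = F2 then 1 else 0)" for a
    have "(\<Sum>a\<in>K. r a * P a) = - (1/2) * (s1^2 * (\<Sum>a\<in>K. n1 a * P a) + s2^2 * (\<Sum>a\<in>K. n2 a * P a))
         + (1/2) * real m * s1^2 * (\<Sum>a\<in>K. (if a = F1 then 1 else 0) * P a)
         + (1/2) * real k * s2^2 * (\<Sum>a\<in>K. (if a = F2 then 1 else 0) * P a)"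
    proof -
      have "(\<Sum>a\<in>K. r a * P a) = (\<Sum>a\<in>K. (-(1/2)* s1^2) * (n1 a * P a) + (-(1/2)* s2^2) * (n2 a * P a)
          + ((1/2)*real m* s1^2) * ((if a = F1 then 1 else 0) * P a) + ((1/2)*real k* s2^2) * ((if a = F2 then 1 else 0) * P a))"
        by (rule sum.cong) (simp_all add: r_def algebra_simps)
      also have "\<dots> = (-(1/2)* s1^2) * (\<Sum>a\<in>K. n1 a * P a) + (-(1/2)* s2^2) * (\<Sum>a\<in>K. n2 a * P a)
          + ((1/2)*real m* s1^2) * (\<Sum>a\<in>K. (if a = F1 then 1 else 0) * P a) + ((1/2)*real k* s2^2) * (\<Sum>a\<in>K. (if a = F2 then 1 else 0) * P a)"
        by (simp only: sum.distrib flip: sum_distrib_left)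
      finally show ?thesis by (simp add: algebra_simps)
    qed
    also have "\<dots> = ricci_form br ip es X Y"
      unfolding ric P_def by (simp add: if01' sum.delta finK F1K F2K)
    finally have l: "ricci_form br ip es X Y = (\<Sum>a\<in>K. r a * P a)" by simp
    have "r a = lam + dd a" for a
      by (cases a) (simp_all add: r_def dd_def lam_def a1_def a2_def s1 s2 field_simps)
    then show ?thesis unfolding l r by simp
  qed
  show ?thesis unfolding einstein_nilradical_def
    using ipinner onb der Dsym ricD by blast
qed



lemma functional_avoid:
  fixes S :: "'a::euclidean_space set"
  assumes "subspace S" "v \<notin> S"
  shows "\<exists>\<phi>. linear \<phi> \<and> \<phi> v = (1::real) \<and> (\<forall>w\<in>S. \<phi> w = 0)"
proof -
  obtain y z where y: "y \<in> span S" and z: "\<And>w. w \<in> span S \<Longrightarrow> orthogonal z w" and v: "v = y + z"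
    using orthogonal_subspace_decomp_exists[of S v] by blast
  have spS: "span S = S" using assms(1) by (simp add: span_eq_iff)
  have z0: "z \<noteq> 0" using v y assms(2) spS by auto
  have zz: "inner z z \<noteq> 0" using z0 by simp
  define \<phi> where "\<phi> w = inner w z / inner z z" for w
  have "linear \<phi>" unfolding \<phi>_def
    by (rule linearI) (simp_all add: inner_add_left add_divide_distrib)
  moreover have "\<phi> v = 1" unfolding \<phi>_def v using z[OF y] zz
    by (simp add: inner_add_left inner_add_right orthogonal_def inner_commute)
  moreover have "\<forall>w\<in>S. \<phi> w = 0" unfolding \<phi>_def using z spS
    by (auto simp: orthogonal_def inner_commute)
  ultimately show ?thesis by blast
qed

lemma dual_indep:
  fixes v :: "'b \<Rightarrow> 'a::euclidean_space"
  assumes fin: "finite K"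
    and du: "\<And>a. a \<in> K \<Longrightarrow> \<exists>\<phi>. linear \<phi> \<and> \<phi> (v a) = (1::real) \<and> (\<forall>b\<in>K. b \<noteq> a \<longrightarrow> \<phi> (v b) = 0)"
  shows "inj_on v K" "independent (v ` K)"
proof -
  show inj: "inj_on v K"
  proof (rule inj_onI, rule ccontr)
    fix a b assume ab: "a \<in> K" "b \<in> K" "v a = v b" "a \<noteq> b"
    obtain \<phi> :: "'a \<Rightarrow> real" where "linear \<phi>" "\<phi> (v a) = 1" "\<forall>c\<in>K. c \<noteq> a \<longrightarrow> \<phi> (v c) = 0" using du[OF ab(1)] by blast
    then show False using ab by force
  qed
  show "independent (v ` K)"
  proof
    assume "dependent (v ` K)"
    then obtain u where u: "\<exists>w\<in>v ` K. u w \<noteq> 0" "(\<Sum>w\<in>v ` K. u w *\<^sub>R w) = 0"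
      using dependent_finite[of "v ` K"] fin by auto
    then obtain a where a: "a \<in> K" "u (v a) \<noteq> 0" by auto
    obtain \<phi> :: "'a \<Rightarrow> real" where ph: "linear \<phi>" "\<phi> (v a) = 1" "\<forall>c\<in>K. c \<noteq> a \<longrightarrow> \<phi> (v c) = 0" using du[OF a(1)] by blast
    have "0 = \<phi> (\<Sum>w\<in>v ` K. u w *\<^sub>R w)" using u(2) linear_0[OF ph(1)] by simp
    also have "\<dots> = (\<Sum>w\<in>v ` K. u w * \<phi> w)" by (simp add: linear_sum[OF ph(1)] linear_scale[OF ph(1)])
    also have "\<dots> = (\<Sum>c\<in>K. u (v c) * \<phi> (v c))" by (rule sum.reindex[OF inj, unfolded comp_def])
    also have "\<dots> = (\<Sum>c\<in>K. if c = a then u (v a) else 0)"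
      by (rule sum.cong[OF refl]) (use ph in auto)
    also have "\<dots> = u (v a)" using fin a(1) by simp
    finally show False using a(2) by simp
  qed
qed

lemma side:
  fixes br :: "'a::euclidean_space \<Rightarrow> 'a \<Rightarrow> 'a" and I J :: "'a set" and z :: 'a
  assumes lin1: "\<And>x. linear (br x)" and lin2: "\<And>y. linear (\<lambda>x. br x y)" and alt: "\<And>x. br x x = 0"
    and subI: "subspace I" and dec: "\<And>x. \<exists>i\<in>I. \<exists>j\<in>J. x = i + j"
    and cross: "\<And>i j. i \<in> I \<Longrightarrow> j \<in> J \<Longrightarrow> br i j = 0"
    and zI: "z \<in> I" and z0: "z \<noteq> 0" and zc: "\<And>x. br z x = 0"
    and val: "\<And>a b. a \<in> I \<Longrightarrow> b \<in> I \<Longrightarrow> br a b \<in> span {z}"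
    and cen: "\<And>w. w \<in> I \<Longrightarrow> (\<forall>x. br w x = 0) \<Longrightarrow> w \<in> span {z}"
  shows "\<exists>(m::nat) xs ys. (\<forall>p<m. xs p \<in> I \<and> ys p \<in> I \<and> inner (xs p) z = 0 \<and> inner (ys p) z = 0) \<and>
      (\<forall>p<m. \<forall>q<m. br (xs p) (ys q) = (if p = q then z else 0) \<and> br (xs p) (xs q) = 0 \<and> br (ys p) (ys q) = 0) \<and>
      I \<subseteq> span (insert z (xs ` {..<m} \<union> ys ` {..<m}))"
proof -
  have anti: "\<And>x y. br x y = - br y x" using bil_antisym[OF lin1 lin2 alt] .
  define W where "W = {w\<in>I. inner w z = 0}"
  have subW: "subspace W" unfolding W_def subspace_def using subI
    by (auto simp: subspace_def inner_add_left)
  have zz: "inner z z \<noteq> 0" using z0 by simp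
  have proj: "u - (inner u z / inner z z) *\<^sub>R z \<in> W" if "u \<in> I" for u
    unfolding W_def using that zI subI zz
    by (auto simp: subspace_diff subspace_scale inner_diff_left)
  have nd: "\<forall>x\<in>W. x \<noteq> 0 \<longrightarrow> (\<exists>y\<in>W. br x y \<noteq> 0)"
  proof (intro ballI impI, rule ccontr)
    fix w assume w: "w \<in> W" "w \<noteq> 0" and no: "\<not> (\<exists>y\<in>W. br w y \<noteq> 0)"
    have wI: "w \<in> I" using w unfolding W_def by auto
    have "br w x = 0" for x
    proof -
      obtain i j where ij: "i \<in> I" "j \<in> J" "x = i + j" using dec by blast
      define c where "c = inner i z / inner z z"
      have "br w i = br w (i - c *\<^sub>R z) + c *\<^sub>R br w z"
        by (simp add: linear_diff[OF lin1] linear_scale[OF lin1])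
      also have "br w (i - c *\<^sub>R z) = 0" using no proj[OF ij(1)] unfolding c_def by auto
      also have "br w z = 0" using anti[of w z] zc by simp
      finally have "br w i = 0" by simp
      moreover have "br w j = 0" using cross wI ij by auto
      ultimately show ?thesis using ij by (simp add: linear_add[OF lin1])
    qed
    then have "w \<in> span {z}" using cen wI by auto
    then obtain c where c: "w = c *\<^sub>R z" by (auto simp: span_singleton)
    have "inner w z = 0" using w unfolding W_def by auto
    then have "c = 0" using c zz by simp
    then show False using c w by simp
  qed
  have valW: "\<forall>x\<in>W. \<forall>y\<in>W. br x y \<in> span {z}" using val unfolding W_def by auto
  obtain m :: nat and xs ys where A: "\<forall>p<m. xs p \<in> W \<and> ys p \<in> W"
    and B: "\<forall>p<m. \<forall>q<m. br (xs p) (ys q) = (if p = q then z else 0) \<and> br (xs p) (xs q) = 0 \<and> br (ys p) (ys q) = 0"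
    and C: "W \<subseteq> span (xs ` {..<m} \<union> ys ` {..<m})"
    using symp_basis[OF lin1 lin2 alt z0 subW valW nd] by blast
  have "I \<subseteq> span (insert z (xs ` {..<m} \<union> ys ` {..<m}))"
  proof
    fix u assume u: "u \<in> I"
    have "u - (inner u z / inner z z) *\<^sub>R z \<in> span (insert z (xs ` {..<m} \<union> ys ` {..<m}))"
      using C proj[OF u] span_mono[of "xs ` {..<m} \<union> ys ` {..<m}" "insert z (xs ` {..<m} \<union> ys ` {..<m})"] by auto
    moreover have "z \<in> span (insert z (xs ` {..<m} \<union> ys ` {..<m}))" by (simp add: span_base)
    ultimately show "u \<in> span (insert z (xs ` {..<m} \<union> ys ` {..<m}))"
      by (metis diff_add_cancel span_add span_scale)
  qed
  then show ?thesis using A B unfolding W_def by blast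
qed



lemma Kset_cases:
  assumes "a \<in> Kset m k"
  shows "(\<exists>p<m. a = IX p) \<or> (\<exists>p<m. a = IY p) \<or> (\<exists>p<k. a = IU p) \<or> (\<exists>p<k. a = IV p) \<or> a = F1 \<or> a = F2"
  using assms unfolding Kset_def by auto

lemma lin_inner_comp:
  fixes f :: "'a::euclidean_space \<Rightarrow> 'a"
  assumes "linear f"
  shows "linear (\<lambda>w. inner (f w) z / c)"
  by (rule linearI) (simp_all add: linear_add[OF assms] linear_scale[OF assms] inner_add_left add_divide_distrib)

theorem mainTheorem15:
  fixes br :: "'a::euclidean_space \<Rightarrow> 'a \<Rightarrow> 'a" and q :: nat
  assumes "two_step_nilpotent br"
    and "lie_type br 2 q"
    and "derived_algebra br = lie_center br"
    and "\<not> einstein_nilradical br"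
  shows "indecomposable br"
proof (rule ccontr)
  assume "\<not> indecomposable br"
  then obtain I J where idI: "lie_ideal br I" and idJ: "lie_ideal br J" and I0: "I \<noteq> {0}" and J0: "J \<noteq> {0}"
    and IJ: "I \<inter> J = {0}" and IJU: "{x + y | x y. x \<in> I \<and> y \<in> J} = UNIV"
    unfolding indecomposable_def by blast
  have la: "lie_algebra br" using assms(1) unfolding two_step_nilpotent_def by blast
  have lin1: "\<And>x. linear (br x)" and lin2: "\<And>y. linear (\<lambda>x. br x y)" and alt: "\<And>x. br x x = 0"
    using la unfolding lie_algebra_def by blast+
  have anti: "\<And>x y. br x y = - br y x" using bil_antisym[OF lin1 lin2 alt] .
  have subI: "subspace I" and subJ: "subspace J" using idI idJ unfolding lie_ideal_def by blast+
  have inI: "\<And>x y. y \<in> I \<Longrightarrow> br x y \<in> I" "\<And>x y. x \<in> I \<Longrightarrow> br x y \<in> I"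
    using idI subI unfolding lie_ideal_def by (metis anti subspace_neg)+
  have inJ: "\<And>x y. y \<in> J \<Longrightarrow> br x y \<in> J" "\<And>x y. x \<in> J \<Longrightarrow> br x y \<in> J"
    using idJ subJ unfolding lie_ideal_def by (metis anti subspace_neg)+
  have cross: "\<And>i j. i \<in> I \<Longrightarrow> j \<in> J \<Longrightarrow> br i j = 0"
    using inI inJ IJ by blast
  have cross': "\<And>i j. i \<in> J \<Longrightarrow> j \<in> I \<Longrightarrow> br i j = 0"
    using cross anti by (metis neg_equal_0_iff_equal)
  have dec: "\<And>x. \<exists>i\<in>I. \<exists>j\<in>J. x = i + j" using IJU by blast
  have dec': "\<And>x. \<exists>i\<in>J. \<exists>j\<in>I. x = i + j" using dec by (metis add.commute)
  have IJ': "J \<inter> I = {0}" using IJ by blast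
  have brdec: "br (i + j) (i' + j') = br i i' + br j j'" if "i \<in> I" "i' \<in> I" "j \<in> J" "j' \<in> J" for i i' j j'
    using that cross cross' by (simp add: linear_add[OF lin1] linear_add[OF lin2])
  define SI where "SI = span {br a b | a b. a \<in> I \<and> b \<in> I}"
  define SJ where "SJ = span {br a b | a b. a \<in> J \<and> b \<in> J}"
  have SII: "SI \<subseteq> I" unfolding SI_def using inI subI by (intro span_minimal) auto
  have SJJ: "SJ \<subseteq> J" unfolding SJ_def using inJ subJ by (intro span_minimal) auto
  have der: "derived_algebra br = {a + b | a b. a \<in> SI \<and> b \<in> SJ}"
  proof -
    have "derived_algebra br = span ({br a b | a b. a \<in> I \<and> b \<in> I} \<union> {br a b | a b. a \<in> J \<and> b \<in> J})"
      unfolding derived_algebra_def span_eq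
    proof
      show "{br x y |x y. True} \<subseteq> span ({br a b |a b. a \<in> I \<and> b \<in> I} \<union> {br a b |a b. a \<in> J \<and> b \<in> J})"
      proof
        fix t assume "t \<in> {br x y |x y. True}"
        then obtain x y where t: "t = br x y" by blast
        obtain i j where ij: "i \<in> I" "j \<in> J" "x = i + j" using dec by blast
        obtain i' j' where ij': "i' \<in> I" "j' \<in> J" "y = i' + j'" using dec by blast
        have "t = br i i' + br j j'" using t ij ij' brdec by simp
        moreover have "br i i' \<in> span ({br a b |a b. a \<in> I \<and> b \<in> I} \<union> {br a b |a b. a \<in> J \<and> b \<in> J})"
          using ij ij' by (intro span_base) blast
        moreover have "br j j' \<in> span ({br a b |a b. a \<in> I \<and> b \<in> I} \<union> {br a b |a b. a \<in> J \<and> b \<in> J})"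
          using ij ij' by (intro span_base) blast
        ultimately show "t \<in> span ({br a b |a b. a \<in> I \<and> b \<in> I} \<union> {br a b |a b. a \<in> J \<and> b \<in> J})"
          by (simp add: span_add)
      qed
      show "{br a b |a b. a \<in> I \<and> b \<in> I} \<union> {br a b |a b. a \<in> J \<and> b \<in> J} \<subseteq> span {br x y |x y. True}"
        by (auto intro: span_base)
    qed
    then show ?thesis unfolding span_Un SI_def SJ_def by simp
  qed
  have cen: "lie_center br = {a + b | a b. a \<in> SI \<and> b \<in> SJ}" using der assms(3) by simp
  have SIJ: "SI \<inter> SJ \<subseteq> {0}" using SII SJJ IJ by blast
  have cenI: "w \<in> SI" if "w \<in> I" "\<forall>x. br w x = 0" for w
  proof -
    have "w \<in> lie_center br" using that unfolding lie_center_def by auto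
    then obtain a b where ab: "a \<in> SI" "b \<in> SJ" "w = a + b" using cen by blast
    have "b = w - a" using ab by simp
    moreover have "w - a \<in> I" using that(1) ab(1) SII subI by (auto intro: subspace_diff)
    ultimately have "b \<in> I \<inter> J" using ab(2) SJJ by auto
    then have "b = 0" using IJ by auto
    then show ?thesis using ab by simp
  qed
  have cenJ: "w \<in> SJ" if "w \<in> J" "\<forall>x. br w x = 0" for w
  proof -
    have "w \<in> lie_center br" using that unfolding lie_center_def by auto
    then obtain a b where ab: "a \<in> SI" "b \<in> SJ" "w = a + b" using cen by blast
    have "a = w - b" using ab by simp
    moreover have "w - b \<in> J" using that(1) ab(2) SJJ subJ by (auto intro: subspace_diff)
    ultimately have "a \<in> I \<inter> J" using ab(1) SII by auto
    then have "a = 0" using IJ by auto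
    then show ?thesis using ab by simp
  qed
  have SI0: "\<not> SI \<subseteq> {0}"
  proof
    assume S: "SI \<subseteq> {0}"
    obtain i where i: "i \<in> I" "i \<noteq> 0" using I0 subI subspace_0 by blast
    have "br i x = 0" for x
    proof -
      obtain i' j' where ij': "i' \<in> I" "j' \<in> J" "x = i' + j'" using dec by blast
      have "br i i' \<in> SI" unfolding SI_def using i ij' by (intro span_base) blast
      then have "br i i' = 0" using S by auto
      then show ?thesis using ij' i cross by (simp add: linear_add[OF lin1])
    qed
    then have "i \<in> SI" using cenI i by auto
    then show False using S i by auto
  qed
  have SJ0: "\<not> SJ \<subseteq> {0}"
  proof
    assume S: "SJ \<subseteq> {0}"
    obtain i where i: "i \<in> J" "i \<noteq> 0" using J0 subJ subspace_0 by blast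
    have "br i x = 0" for x
    proof -
      obtain i' j' where ij': "i' \<in> I" "j' \<in> J" "x = i' + j'" using dec by blast
      have "br i j' \<in> SJ" unfolding SJ_def using i ij' by (intro span_base) blast
      then have "br i j' = 0" using S by auto
      then show ?thesis using ij' i cross' by (simp add: linear_add[OF lin1])
    qed
    then have "i \<in> SJ" using cenJ i by auto
    then show False using S i by auto
  qed
  have dimder: "dim (derived_algebra br) = 2" using assms(2) unfolding lie_type_def by blast
  have "dim SI + dim SJ = 2"
  proof -
    have "dim {a + b | a b. a \<in> SI \<and> b \<in> SJ} + dim (SI \<inter> SJ) = dim SI + dim SJ"
      unfolding SI_def SJ_def by (rule dim_sums_Int) (rule subspace_span)+
    moreover have "dim (SI \<inter> SJ) = 0" using SIJ by simp
    ultimately show ?thesis using dimder der by simp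
  qed
  moreover have "dim SI \<noteq> 0" "dim SJ \<noteq> 0" using SI0 SJ0 dim_eq_0 by blast+
  ultimately have dSI: "dim SI = 1" and dSJ: "dim SJ = 1" by linarith+
  have one_dim: "\<exists>z. z \<noteq> 0 \<and> S = span {z}" if sS: "subspace S" and dS: "dim S = 1" for S :: "'a set"
  proof -
    obtain B where B: "B \<subseteq> S" "independent B" "S \<subseteq> span B" "card B = dim S" by (rule basis_exists)
    then obtain z where z: "B = {z}" using dS by (metis card_1_singletonE)
    have "z \<noteq> 0" using B(2) z dependent_zero by blast
    moreover have "S = span {z}" using B z sS by (metis span_subspace)
    ultimately show ?thesis by blast
  qed
  obtain z1 where z1: "z1 \<noteq> 0" "SI = span {z1}" using one_dim[OF _ dSI] unfolding SI_def by (auto simp: subspace_span)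
  obtain z2 where z2: "z2 \<noteq> 0" "SJ = span {z2}" using one_dim[OF _ dSJ] unfolding SJ_def by (auto simp: subspace_span)
  have z1SI: "z1 \<in> SI" and z2SJ: "z2 \<in> SJ" using z1 z2 by (auto intro: span_base)
  have z1I: "z1 \<in> I" and z2J: "z2 \<in> J" using z1SI z2SJ SII SJJ by auto
  have z1c: "br z1 x = 0" for x
  proof -
    have "z1 \<in> lie_center br" using cen z1SI subspace_0[OF subspace_span[of "{br a b | a b. a \<in> J \<and> b \<in> J}"]]
      unfolding SJ_def by force
    then show ?thesis unfolding lie_center_def by auto
  qed
  have z2c: "br z2 x = 0" for x
  proof -
    have "z2 \<in> lie_center br" using cen z2SJ subspace_0[OF subspace_span[of "{br a b | a b. a \<in> I \<and> b \<in> I}"]]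
      unfolding SI_def by force
    then show ?thesis unfolding lie_center_def by auto
  qed
  have val1: "\<And>a b. a \<in> I \<Longrightarrow> b \<in> I \<Longrightarrow> br a b \<in> span {z1}"
    using z1(2) unfolding SI_def by (auto intro: span_base)
  have val2: "\<And>a b. a \<in> J \<Longrightarrow> b \<in> J \<Longrightarrow> br a b \<in> span {z2}"
    using z2(2) unfolding SJ_def by (auto intro: span_base)
  have cen1: "\<And>w. w \<in> I \<Longrightarrow> (\<forall>x. br w x = 0) \<Longrightarrow> w \<in> span {z1}" using cenI z1(2) by auto
  have cen2: "\<And>w. w \<in> J \<Longrightarrow> (\<forall>x. br w x = 0) \<Longrightarrow> w \<in> span {z2}" using cenJ z2(2) by auto
  obtain m :: nat and xs ys where
    A1: "\<forall>p<m. xs p \<in> I \<and> ys p \<in> I \<and> inner (xs p) z1 = 0 \<and> inner (ys p) z1 = 0" and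
    B1: "\<forall>p<m. \<forall>q<m. br (xs p) (ys q) = (if p = q then z1 else 0) \<and> br (xs p) (xs q) = 0 \<and> br (ys p) (ys q) = 0" and
    C1: "I \<subseteq> span (insert z1 (xs ` {..<m} \<union> ys ` {..<m}))"
    using side[OF lin1 lin2 alt subI dec cross z1I z1(1) z1c val1 cen1] by blast
  obtain k :: nat and us vs where
    A2: "\<forall>p<k. us p \<in> J \<and> vs p \<in> J \<and> inner (us p) z2 = 0 \<and> inner (vs p) z2 = 0" and
    B2: "\<forall>p<k. \<forall>q<k. br (us p) (vs q) = (if p = q then z2 else 0) \<and> br (us p) (us q) = 0 \<and> br (vs p) (vs q) = 0" and
    C2: "J \<subseteq> span (insert z2 (us ` {..<k} \<union> vs ` {..<k}))"
    using side[OF lin1 lin2 alt subJ dec' cross' z2J z2(1) z2c val2 cen2] by blast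
  define K where "K = Kset m k"
  have finK: "finite K" by (simp add: K_def)
  define s1 where "s1 = sqrt (real k + 2)"
  define s2 where "s2 = sqrt (real m + 2)"
  have s1p: "s1 > 0" and s2p: "s2 > 0" unfolding s1_def s2_def by auto
  have s1sq: "s1^2 = real k + 2" and s2sq: "s2^2 = real m + 2" unfolding s1_def s2_def by simp_all
  define bv where "bv a = (case a of IX p \<Rightarrow> xs p | IY p \<Rightarrow> ys p | IU p \<Rightarrow> us p | IV p \<Rightarrow> vs p
      | F1 \<Rightarrow> inverse s1 *\<^sub>R z1 | F2 \<Rightarrow> inverse s2 *\<^sub>R z2)" for a
  have bvs[simp]: "bv (IX p) = xs p" "bv (IY p) = ys p" "bv (IU p) = us p" "bv (IV p) = vs p"
    "bv F1 = inverse s1 *\<^sub>R z1" "bv F2 = inverse s2 *\<^sub>R z2" for p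
    unfolding bv_def by simp_all
  have memI[simp]: "p < m \<Longrightarrow> xs p \<in> I" "p < m \<Longrightarrow> ys p \<in> I" for p using A1 by auto
  have memJ[simp]: "p < k \<Longrightarrow> us p \<in> J" "p < k \<Longrightarrow> vs p \<in> J" for p using A2 by auto
  have orthz[simp]: "p < m \<Longrightarrow> inner (xs p) z1 = 0" "p < m \<Longrightarrow> inner (ys p) z1 = 0"
     "p < k \<Longrightarrow> inner (us p) z2 = 0" "p < k \<Longrightarrow> inner (vs p) z2 = 0" for p using A1 A2 by auto
  have brs: "p < m \<Longrightarrow> q < m \<Longrightarrow> br (xs p) (ys q) = (if p = q then z1 else 0)"
    "p < m \<Longrightarrow> q < m \<Longrightarrow> br (ys p) (xs q) = (if p = q then - z1 else 0)"
    "p < m \<Longrightarrow> q < m \<Longrightarrow> br (xs p) (xs q) = 0"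
    "p < m \<Longrightarrow> q < m \<Longrightarrow> br (ys p) (ys q) = 0"
    "p < k \<Longrightarrow> q < k \<Longrightarrow> br (us p) (vs q) = (if p = q then z2 else 0)"
    "p < k \<Longrightarrow> q < k \<Longrightarrow> br (vs p) (us q) = (if p = q then - z2 else 0)"
    "p < k \<Longrightarrow> q < k \<Longrightarrow> br (us p) (us q) = 0"
    "p < k \<Longrightarrow> q < k \<Longrightarrow> br (vs p) (vs q) = 0" for p q
    using B1 B2 anti[of "ys p" "xs q"] anti[of "vs p" "us q"] by auto
  have crs[simp]: "i \<in> I \<Longrightarrow> j \<in> J \<Longrightarrow> br i j = 0" "i \<in> I \<Longrightarrow> j \<in> J \<Longrightarrow> br j i = 0" for i j
    using cross cross' by auto
  have zc[simp]: "br (c *\<^sub>R z1) x = 0" "br x (c *\<^sub>R z1) = 0" "br (c *\<^sub>R z2) x = 0" "br x (c *\<^sub>R z2) = 0"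
    "br z1 x = 0" "br x z1 = 0" "br z2 x = 0" "br x z2 = 0" for c x
    using z1c z2c anti[of x z1] anti[of x z2] linear_scale[OF lin2] linear_scale[OF lin1] by auto
  have tab0: "br (bv a) (bv b) = st1 a b *\<^sub>R z1 + st2 a b *\<^sub>R z2" if "a \<in> K" "b \<in> K" for a b
    using Kset_cases[OF that(1)[unfolded K_def]] Kset_cases[OF that(2)[unfolded K_def]]
    by (elim disjE exE conjE) (simp_all add: brs)
  have tab: "br (bv a) (bv b) = (s1 * st1 a b) *\<^sub>R bv F1 + (s2 * st2 a b) *\<^sub>R bv F2" if "a \<in> Kset m k" "b \<in> Kset m k" for a b
    using tab0[of a b] that s1p s2p unfolding K_def by (simp add: field_simps)
  have zz1: "inner z1 z1 \<noteq> 0" and zz2: "inner z2 z2 \<noteq> 0" using z1 z2 by auto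
  have du: "\<exists>\<phi>. linear \<phi> \<and> \<phi> (bv a) = (1::real) \<and> (\<forall>b\<in>K. b \<noteq> a \<longrightarrow> \<phi> (bv b) = 0)" if a: "a \<in> K" for a
  proof -
    have sI: "\<And>i. i \<in> I \<Longrightarrow> c *\<^sub>R i \<in> I" for c using subI by (simp add: subspace_scale)
    have sJ: "\<And>i. i \<in> J \<Longrightarrow> c *\<^sub>R i \<in> J" for c using subJ by (simp add: subspace_scale)
    consider (X) p where "p < m" "a = IX p" | (Y) p where "p < m" "a = IY p" | (U) p where "p < k" "a = IU p"
      | (V) p where "p < k" "a = IV p" | (F1) "a = F1" | (F2) "a = F2"
      using Kset_cases[OF a[unfolded K_def]] by blast
    then show ?thesis
    proof cases
      case X
      define \<phi> where "\<phi> w = inner (br w (ys p)) z1 / inner z1 z1" for w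
      have "linear \<phi>" unfolding \<phi>_def by (rule lin_inner_comp[OF lin2])
      moreover have "\<phi> (bv b) = (if b = a then 1 else 0)" if "b \<in> K" for b
        using Kset_cases[OF that[unfolded K_def]] X zz1
        by (elim disjE exE conjE) (auto simp: \<phi>_def brs z1I z2J)
      ultimately show ?thesis using a by (intro exI[of _ \<phi>]) auto
    next
      case Y
      define \<phi> where "\<phi> w = inner (br (xs p) w) z1 / inner z1 z1" for w
      have "linear \<phi>" unfolding \<phi>_def by (rule lin_inner_comp[OF lin1])
      moreover have "\<phi> (bv b) = (if b = a then 1 else 0)" if "b \<in> K" for b
        using Kset_cases[OF that[unfolded K_def]] Y zz1
        by (elim disjE exE conjE) (auto simp: \<phi>_def brs z1I z2J)
      ultimately show ?thesis using a by (intro exI[of _ \<phi>]) auto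
    next
      case U
      define \<phi> where "\<phi> w = inner (br w (vs p)) z2 / inner z2 z2" for w
      have "linear \<phi>" unfolding \<phi>_def by (rule lin_inner_comp[OF lin2])
      moreover have "\<phi> (bv b) = (if b = a then 1 else 0)" if "b \<in> K" for b
        using Kset_cases[OF that[unfolded K_def]] U zz2
        by (elim disjE exE conjE) (auto simp: \<phi>_def brs z1I z2J)
      ultimately show ?thesis using a by (intro exI[of _ \<phi>]) auto
    next
      case V
      define \<phi> where "\<phi> w = inner (br (us p) w) z2 / inner z2 z2" for w
      have "linear \<phi>" unfolding \<phi>_def by (rule lin_inner_comp[OF lin1])
      moreover have "\<phi> (bv b) = (if b = a then 1 else 0)" if "b \<in> K" for b
        using Kset_cases[OF that[unfolded K_def]] V zz2
        by (elim disjE exE conjE) (auto simp: \<phi>_def brs z1I z2J)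
      ultimately show ?thesis using a by (intro exI[of _ \<phi>]) auto
    next
      case F1
      define W1 where "W1 = {w\<in>I. inner w z1 = 0}"
      have notin: "bv F1 \<notin> span (W1 \<union> J)"
      proof
        assume "bv F1 \<in> span (W1 \<union> J)"
        then have "s1 *\<^sub>R bv F1 \<in> span (W1 \<union> J)" by (rule span_scale)
        then have "z1 \<in> span (W1 \<union> J)" using s1p by simp
        then obtain x y where xy: "x \<in> span W1" "y \<in> span J" "z1 = x + y" unfolding span_Un by blast
        have "span W1 \<subseteq> I" using subI unfolding W1_def by (intro span_minimal) auto
        then have xI: "x \<in> I" using xy by auto
        have yJ: "y \<in> J" using xy subJ by (metis span_eq_iff)
        have "y = z1 - x" using xy by simp
        then have "y \<in> I" using xI z1I subI by (simp add: subspace_diff)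
        then have "y = 0" using yJ IJ by auto
        then have "z1 = x" using xy by simp
        moreover have "inner x z1 = 0"
        proof -
          have lin: "linear (\<lambda>w. inner w z1)" by (rule linearI) (simp_all add: inner_add_left)
          show ?thesis by (rule real_vector.linear_eq_0_on_span[OF lin _ xy(1)]) (simp add: W1_def)
        qed
        ultimately show False using zz1 by simp
      qed
      obtain \<phi> :: "'a \<Rightarrow> real" where ph: "linear \<phi>" "\<phi> (bv F1) = 1" "\<forall>w\<in>span (W1 \<union> J). \<phi> w = 0"
        using functional_avoid[OF subspace_span notin] by blast
      have "\<phi> (bv b) = 0" if "b \<in> K" "b \<noteq> a" for b
      proof -
        have "bv b \<in> W1 \<union> J"
          using Kset_cases[OF that(1)[unfolded K_def]] that(2) F1 z2J sJ
          by (elim disjE exE conjE) (auto simp: W1_def)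
        then show ?thesis using ph(3) span_base by blast
      qed
      then show ?thesis using ph F1 by auto
    next
      case F2
      define W2 where "W2 = {w\<in>J. inner w z2 = 0}"
      have notin: "bv F2 \<notin> span (W2 \<union> I)"
      proof
        assume "bv F2 \<in> span (W2 \<union> I)"
        then have "s2 *\<^sub>R bv F2 \<in> span (W2 \<union> I)" by (rule span_scale)
        then have "z2 \<in> span (W2 \<union> I)" using s2p by simp
        then obtain x y where xy: "x \<in> span W2" "y \<in> span I" "z2 = x + y" unfolding span_Un by blast
        have "span W2 \<subseteq> J" using subJ unfolding W2_def by (intro span_minimal) auto
        then have xJ: "x \<in> J" using xy by auto
        have yI: "y \<in> I" using xy subI by (metis span_eq_iff)
        have "y = z2 - x" using xy by simp
        then have "y \<in> J" using xJ z2J subJ by (simp add: subspace_diff)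
        then have "y = 0" using yI IJ by auto
        then have "z2 = x" using xy by simp
        moreover have "inner x z2 = 0"
        proof -
          have lin: "linear (\<lambda>w. inner w z2)" by (rule linearI) (simp_all add: inner_add_left)
          show ?thesis by (rule real_vector.linear_eq_0_on_span[OF lin _ xy(1)]) (simp add: W2_def)
        qed
        ultimately show False using zz2 by simp
      qed
      obtain \<phi> :: "'a \<Rightarrow> real" where ph: "linear \<phi>" "\<phi> (bv F2) = 1" "\<forall>w\<in>span (W2 \<union> I). \<phi> w = 0"
        using functional_avoid[OF subspace_span notin] by blast
      have "\<phi> (bv b) = 0" if "b \<in> K" "b \<noteq> a" for b
      proof -
        have "bv b \<in> W2 \<union> I"
          using Kset_cases[OF that(1)[unfolded K_def]] that(2) F2 z1I sI
          by (elim disjE exE conjE) (auto simp: W2_def)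
        then show ?thesis using ph(3) span_base by blast
      qed
      then show ?thesis using ph F2 by auto
    qed
  qed
  have inj: "inj_on bv (Kset m k)" and ind: "independent (bv ` Kset m k)"
    using dual_indep[OF finK du] unfolding K_def by auto
  have spn: "span (bv ` Kset m k) = UNIV"
  proof -
    have sub1: "insert z1 (xs ` {..<m} \<union> ys ` {..<m}) \<subseteq> span (bv ` Kset m k)"
    proof -
      have "z1 = s1 *\<^sub>R bv F1" using s1p by simp
      moreover have "bv F1 \<in> bv ` Kset m k" by (auto simp: Kset_def)
      ultimately have "z1 \<in> span (bv ` Kset m k)" by (metis span_base span_scale)
      moreover have "xs p \<in> span (bv ` Kset m k)" "ys p \<in> span (bv ` Kset m k)" if "p < m" for p
        using that by (auto intro!: span_base simp: Kset_def image_iff bvs[symmetric] simp del: bvs)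
      ultimately show ?thesis by auto
    qed
    have sub2: "insert z2 (us ` {..<k} \<union> vs ` {..<k}) \<subseteq> span (bv ` Kset m k)"
    proof -
      have "z2 = s2 *\<^sub>R bv F2" using s2p by simp
      moreover have "bv F2 \<in> bv ` Kset m k" by (auto simp: Kset_def)
      ultimately have "z2 \<in> span (bv ` Kset m k)" by (metis span_base span_scale)
      moreover have "us p \<in> span (bv ` Kset m k)" "vs p \<in> span (bv ` Kset m k)" if "p < k" for p
        using that by (auto intro!: span_base simp: Kset_def image_iff bvs[symmetric] simp del: bvs)
      ultimately show ?thesis by auto
    qed
    have "I \<subseteq> span (bv ` Kset m k)" using C1 span_minimal[OF sub1 subspace_span] by blast
    moreover have "J \<subseteq> span (bv ` Kset m k)" using C2 span_minimal[OF sub2 subspace_span] by blast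
    ultimately have "x \<in> span (bv ` Kset m k)" for x using dec[of x] span_add by blast
    then show ?thesis by auto
  qed
  have "einstein_nilradical br"
    by (rule einstein_from_basis[OF lin1 lin2 inj ind spn s1sq s2sq tab])
  then show False using assms(4) by simp
qed

end
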